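(* Let $\beta\in\mathbb{C}$ with $|\beta|=1$, let $m\in\mathrm{Hol}(\mathbb{D})$, $m\not\equiv0$, and let $T:\mathrm{Hol}(\mathbb{D})\to\mathrm{Hol}(\mathbb{D})$ be given by $(Tf)(z)=m(z)f(\beta z)$. Then $\sigma(T)=\beta\sigma(T)\cup\{m(0)\}$.
   Context: $\mathbb{D}$ is the open unit disc, $\mathrm{Hol}(\mathbb{D})$ the Fréchet space of holomorphic functions on $\mathbb{D}$. $\sigma(T)$ is the set of $\lambda\in\mathbb{C}$ such that $\lambda\mathrm{Id}-T$ is not bijective on $\mathrm{Hol}(\mathbb{D})$, and $\beta\sigma(T)=\{\beta\lambda:\lambda\in\sigma(T)\}$. *)

theory Defs
  imports "HOL-Complex_Analysis.Complex_Analysis"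
begin

text \<open>Hol(D), represented canonically: holomorphic functions on the unit disc,
  normalised to be 0 outside the disc (so that equality of elements is equality on D).\<close>
definition hol_disc :: "(complex \<Rightarrow> complex) set" where
  "hol_disc = {f. f holomorphic_on ball 0 1 \<and> (\<forall>z. z \<notin> ball 0 1 \<longrightarrow> f z = 0)}"

definition hol_spectrum :: "((complex \<Rightarrow> complex) \<Rightarrow> (complex \<Rightarrow> complex)) \<Rightarrow> complex set" where
  "hol_spectrum T = {l. \<not> bij_betw (\<lambda>f z. l * f z - T f z) hol_disc hol_disc}"

definition wcomp_op :: "(complex \<Rightarrow> complex) \<Rightarrow> complex \<Rightarrow> (complex \<Rightarrow> complex) \<Rightarrow> (complex \<Rightarrow> complex)" where
  "wcomp_op m \<beta> f = (\<lambda>z. if z \<in> ball 0 1 then m z * f (\<beta> * z) else 0)"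

end

theory Submission
  imports Defs
begin

definition LL :: "(complex \<Rightarrow> complex) \<Rightarrow> complex \<Rightarrow> complex \<Rightarrow> (complex \<Rightarrow> complex) \<Rightarrow> (complex \<Rightarrow> complex)" where
  "LL m \<beta> l f = (\<lambda>z. l * f z - wcomp_op m \<beta> f z)"

definition ZZ :: "(complex \<Rightarrow> complex) \<Rightarrow> (complex \<Rightarrow> complex)" where
  "ZZ f = (\<lambda>z. z * f z)"

definition QQ :: "(complex \<Rightarrow> complex) \<Rightarrow> (complex \<Rightarrow> complex)" where
  "QQ g = (\<lambda>z. if z \<in> ball 0 1 then (if z = 0 then deriv g 0 else (g z - g 0) / (z - 0)) else 0)"

definition KK :: "complex \<Rightarrow> (complex \<Rightarrow> complex)" where
  "KK c = (\<lambda>z. if z \<in> ball 0 1 then c else 0)"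

lemma hol_discI:
  assumes "f holomorphic_on ball 0 1" "\<And>z. z \<notin> ball 0 1 \<Longrightarrow> f z = 0"
  shows "f \<in> hol_disc"
  using assms unfolding hol_disc_def by auto

lemma hol_disc_hol: "f \<in> hol_disc \<Longrightarrow> f holomorphic_on ball 0 1"
  unfolding hol_disc_def by auto

lemma hol_disc_out: "f \<in> hol_disc \<Longrightarrow> z \<notin> ball 0 1 \<Longrightarrow> f z = 0"
  unfolding hol_disc_def by auto

lemma hol_disc_diff: "f \<in> hol_disc \<Longrightarrow> g \<in> hol_disc \<Longrightarrow> (\<lambda>z. f z - g z) \<in> hol_disc"
  using hol_disc_out[of f] hol_disc_out[of g]
  by (intro hol_discI holomorphic_intros) (auto dest: hol_disc_hol)

lemma hol_disc_add: "f \<in> hol_disc \<Longrightarrow> g \<in> hol_disc \<Longrightarrow> (\<lambda>z. f z + g z) \<in> hol_disc"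
  using hol_disc_out[of f] hol_disc_out[of g]
  by (intro hol_discI holomorphic_intros) (auto dest: hol_disc_hol)

lemma hol_disc_scale: "f \<in> hol_disc \<Longrightarrow> (\<lambda>z. c * f z) \<in> hol_disc"
  by (intro hol_discI holomorphic_intros) (auto dest: hol_disc_hol hol_disc_out)

lemma KK_in: "KK c \<in> hol_disc"
proof (rule hol_discI)
  show "KK c holomorphic_on ball 0 1"
    by (rule holomorphic_transform[of "\<lambda>z. c"]) (auto simp: KK_def)
qed (auto simp: KK_def)

lemma ZZ_in: "f \<in> hol_disc \<Longrightarrow> ZZ f \<in> hol_disc"
  unfolding ZZ_def by (intro hol_discI holomorphic_intros) (auto dest: hol_disc_hol hol_disc_out)

lemma QQ_in: assumes "g \<in> hol_disc" shows "QQ g \<in> hol_disc"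
proof (rule hol_discI)
  have "(\<lambda>z. if z = 0 then deriv g 0 else (g z - g 0) / (z - 0)) holomorphic_on ball 0 1"
    by (rule pole_lemma_open) (auto intro: hol_disc_hol[OF assms])
  then show "QQ g holomorphic_on ball 0 1"
    by (rule holomorphic_transform) (auto simp: QQ_def)
qed (auto simp: QQ_def)

lemma ZZ_QQ: assumes "g \<in> hol_disc" "g 0 = 0" shows "ZZ (QQ g) = g"
  using assms hol_disc_out[OF assms(1)] by (auto simp: ZZ_def QQ_def fun_eq_iff)

lemma ZZ_inj: assumes "f \<in> hol_disc" "g \<in> hol_disc" "ZZ f = ZZ g" shows "f = g"
proof
  fix z
  show "f z = g z"
  proof (cases "z = 0")
    case False
    then show ?thesis using assms(3) by (auto simp: ZZ_def fun_eq_iff dest: spec[of _ z])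
  next
    case True
    have cf: "isCont f 0" using holomorphic_on_imp_continuous_on[OF hol_disc_hol[OF assms(1)]]
      continuous_on_eq_continuous_at[OF open_ball, of 0 1 f] by simp
    have cg: "isCont g 0" using holomorphic_on_imp_continuous_on[OF hol_disc_hol[OF assms(2)]]
      continuous_on_eq_continuous_at[OF open_ball, of 0 1 g] by simp
    have ev: "eventually (\<lambda>z. f z = g z) (at 0)"
      unfolding eventually_at_filter
      by (rule always_eventually) (use assms(3) in \<open>auto simp: ZZ_def fun_eq_iff\<close>)
    have "(f \<longlongrightarrow> f 0) (at 0)" using cf isCont_def by blast
    then have "(g \<longlongrightarrow> f 0) (at 0)" using ev by (rule Lim_transform_eventually)
    moreover have "(g \<longlongrightarrow> g 0) (at 0)" using cg isCont_def by blast
    ultimately have "f 0 = g 0" using tendsto_unique at_neq_bot by (metis trivial_limit_at)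
    then show ?thesis using True by simp
  qed
qed

context
  fixes m :: "complex \<Rightarrow> complex" and \<beta> :: complex
  assumes nb: "norm \<beta> = 1" and hm: "m holomorphic_on ball 0 1"
begin

lemma wc_in: assumes "f \<in> hol_disc" shows "wcomp_op m \<beta> f \<in> hol_disc"
proof (rule hol_discI)
  have "f \<circ> (\<lambda>z. \<beta> * z) holomorphic_on ball 0 1"
  proof (rule holomorphic_on_compose)
    show "(\<lambda>z. \<beta> * z) holomorphic_on ball 0 1" by (intro holomorphic_intros)
    show "f holomorphic_on (\<lambda>z. \<beta> * z) ` ball 0 1"
      using hol_disc_hol[OF assms] by (rule holomorphic_on_subset) (auto simp: norm_mult nb)
  qed
  then have "(\<lambda>z. m z * f (\<beta> * z)) holomorphic_on ball 0 1"
    using hm by (auto intro!: holomorphic_intros simp: o_def)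
  then show "wcomp_op m \<beta> f holomorphic_on ball 0 1"
    by (rule holomorphic_transform) (auto simp: wcomp_op_def)
qed (auto simp: wcomp_op_def)

lemma LL_in: "f \<in> hol_disc \<Longrightarrow> LL m \<beta> l f \<in> hol_disc"
  unfolding LL_def by (intro hol_disc_diff hol_disc_scale wc_in)

lemma LL_0: "LL m \<beta> l f 0 = (l - m 0) * f 0"
  by (simp add: LL_def wcomp_op_def algebra_simps)

lemma LL_diff: "LL m \<beta> l (\<lambda>z. f z - g z) = (\<lambda>z. LL m \<beta> l f z - LL m \<beta> l g z)"
  by (auto simp: LL_def wcomp_op_def fun_eq_iff algebra_simps)

lemma LL_add: "LL m \<beta> l (\<lambda>z. f z + g z) = (\<lambda>z. LL m \<beta> l f z + LL m \<beta> l g z)"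
  by (auto simp: LL_def wcomp_op_def fun_eq_iff algebra_simps)

lemma LL_scale: "LL m \<beta> l (\<lambda>z. c * f z) = (\<lambda>z. c * LL m \<beta> l f z)"
  by (auto simp: LL_def wcomp_op_def fun_eq_iff algebra_simps)

lemma bcnj: "\<beta> * cnj \<beta> = 1"
  using complex_norm_square[of \<beta>] nb by simp

lemma LL_ZZ: assumes "f \<in> hol_disc"
  shows "LL m \<beta> l (ZZ f) = ZZ (\<lambda>z. \<beta> * LL m \<beta> (cnj \<beta> * l) f z)"
proof
  fix z
  have "\<beta> * (cnj \<beta> * l) = l" using bcnj by (metis mult.assoc mult_1)
  then show "LL m \<beta> l (ZZ f) z = ZZ (\<lambda>z. \<beta> * LL m \<beta> (cnj \<beta> * l) f z) z"
    using hol_disc_out[OF assms, of z]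
    by (auto simp: LL_def ZZ_def wcomp_op_def algebra_simps)
qed

lemma bij_iff: "bij_betw (LL m \<beta> l) hol_disc hol_disc \<longleftrightarrow>
   (\<forall>f\<in>hol_disc. LL m \<beta> l f = (\<lambda>z. 0) \<longrightarrow> f = (\<lambda>z. 0)) \<and> (\<forall>g\<in>hol_disc. \<exists>f\<in>hol_disc. LL m \<beta> l f = g)"
proof -
  have inj: "inj_on (LL m \<beta> l) hol_disc \<longleftrightarrow> (\<forall>f\<in>hol_disc. LL m \<beta> l f = (\<lambda>z. 0) \<longrightarrow> f = (\<lambda>z. 0))"
  proof
    assume i: "inj_on (LL m \<beta> l) hol_disc"
    have z: "(\<lambda>z. 0) \<in> hol_disc" by (rule hol_discI) auto
    have "LL m \<beta> l (\<lambda>z. 0) = (\<lambda>z. 0)" by (auto simp: LL_def wcomp_op_def)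
    then show "\<forall>f\<in>hol_disc. LL m \<beta> l f = (\<lambda>z. 0) \<longrightarrow> f = (\<lambda>z. 0)"
      using inj_onD[OF i _ _ z] by simp
  next
    assume k: "\<forall>f\<in>hol_disc. LL m \<beta> l f = (\<lambda>z. 0) \<longrightarrow> f = (\<lambda>z. 0)"
    show "inj_on (LL m \<beta> l) hol_disc"
    proof (rule inj_onI)
      fix f g assume f: "f \<in> hol_disc" and g: "g \<in> hol_disc" and e: "LL m \<beta> l f = LL m \<beta> l g"
      have "LL m \<beta> l (\<lambda>z. f z - g z) = (\<lambda>z. 0)" using e by (simp add: LL_diff)
      then have "(\<lambda>z. f z - g z) = (\<lambda>z. 0)" using k hol_disc_diff[OF f g] by blast
      then show "f = g" by (auto simp: fun_eq_iff dest: fun_cong)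
    qed
  qed
  have im: "LL m \<beta> l ` hol_disc = hol_disc \<longleftrightarrow> (\<forall>g\<in>hol_disc. \<exists>f\<in>hol_disc. LL m \<beta> l f = g)"
  proof
    assume "LL m \<beta> l ` hol_disc = hol_disc"
    then show "\<forall>g\<in>hol_disc. \<exists>f\<in>hol_disc. LL m \<beta> l f = g"
      by (metis imageE)
  next
    assume a: "\<forall>g\<in>hol_disc. \<exists>f\<in>hol_disc. LL m \<beta> l f = g"
    show "LL m \<beta> l ` hol_disc = hol_disc"
    proof (intro equalityI subsetI)
      fix g assume "g \<in> LL m \<beta> l ` hol_disc"
      then obtain f where "f \<in> hol_disc" "g = LL m \<beta> l f" by (rule imageE)
      then show "g \<in> hol_disc" using LL_in by simp
    next
      fix g assume "g \<in> hol_disc"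
      then obtain f where f1: "f \<in> hol_disc" and f2: "LL m \<beta> l f = g" using a by blast
      show "g \<in> LL m \<beta> l ` hol_disc" by (rule image_eqI[where f="LL m \<beta> l", OF f2[symmetric] f1])
    qed
  qed
  show ?thesis unfolding bij_betw_def inj im ..
qed

lemma key: assumes "l \<noteq> m 0"
  shows "bij_betw (LL m \<beta> l) hol_disc hol_disc \<longleftrightarrow> bij_betw (LL m \<beta> (cnj \<beta> * l)) hol_disc hol_disc"
proof -
  define \<mu> where "\<mu> = cnj \<beta> * l"
  have b0: "\<beta> \<noteq> 0" using nb by auto
  have Z0: "f = (\<lambda>z. 0)" if "f \<in> hol_disc" "ZZ f = (\<lambda>z. 0)" for f
  proof -
    have z: "(\<lambda>z. 0) \<in> hol_disc" by (rule hol_discI) auto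
    show ?thesis using ZZ_inj[OF that(1) z] that(2) by (simp add: ZZ_def)
  qed
  have f0: "f 0 = 0" if "f \<in> hol_disc" "LL m \<beta> l f 0 = 0" for f
    using that assms by (simp add: LL_0)
  have k1: "(\<forall>f\<in>hol_disc. LL m \<beta> l f = (\<lambda>z. 0) \<longrightarrow> f = (\<lambda>z. 0)) \<longleftrightarrow>
            (\<forall>f\<in>hol_disc. LL m \<beta> \<mu> f = (\<lambda>z. 0) \<longrightarrow> f = (\<lambda>z. 0))"
  proof
    assume k: "\<forall>f\<in>hol_disc. LL m \<beta> l f = (\<lambda>z. 0) \<longrightarrow> f = (\<lambda>z. 0)"
    show "\<forall>f\<in>hol_disc. LL m \<beta> \<mu> f = (\<lambda>z. 0) \<longrightarrow> f = (\<lambda>z. 0)"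
    proof (intro ballI impI)
      fix f assume f: "f \<in> hol_disc" and e: "LL m \<beta> \<mu> f = (\<lambda>z. 0)"
      have "LL m \<beta> l (ZZ f) = (\<lambda>z. 0)" using LL_ZZ[OF f, of l] e by (simp add: \<mu>_def ZZ_def)
      then have "ZZ f = (\<lambda>z. 0)" using k ZZ_in[OF f] by blast
      then show "f = (\<lambda>z. 0)" using Z0 f by blast
    qed
  next
    assume k: "\<forall>f\<in>hol_disc. LL m \<beta> \<mu> f = (\<lambda>z. 0) \<longrightarrow> f = (\<lambda>z. 0)"
    show "\<forall>f\<in>hol_disc. LL m \<beta> l f = (\<lambda>z. 0) \<longrightarrow> f = (\<lambda>z. 0)"
    proof (intro ballI impI)
      fix f assume f: "f \<in> hol_disc" and e: "LL m \<beta> l f = (\<lambda>z. 0)"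
      have "f 0 = 0" using f0[OF f] e by simp
      then have fz: "f = ZZ (QQ f)" using ZZ_QQ f by simp
      have q: "QQ f \<in> hol_disc" using QQ_in f by blast
      have "ZZ (\<lambda>z. \<beta> * LL m \<beta> \<mu> (QQ f) z) = (\<lambda>z. 0)"
        using LL_ZZ[OF q, of l] e fz by (simp add: \<mu>_def)
      then have "(\<lambda>z. \<beta> * LL m \<beta> \<mu> (QQ f) z) = (\<lambda>z. 0)"
        using Z0 hol_disc_scale[OF LL_in[OF q]] by blast
      then have "LL m \<beta> \<mu> (QQ f) = (\<lambda>z. 0)" using b0 by (auto simp: fun_eq_iff)
      then have "QQ f = (\<lambda>z. 0)" using k q by blast
      then show "f = (\<lambda>z. 0)" using fz by (simp add: ZZ_def)
    qed
  qed
  have s1: "(\<forall>g\<in>hol_disc. \<exists>f\<in>hol_disc. LL m \<beta> l f = g) \<longleftrightarrow>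
            (\<forall>g\<in>hol_disc. \<exists>f\<in>hol_disc. LL m \<beta> \<mu> f = g)"
  proof
    assume s: "\<forall>g\<in>hol_disc. \<exists>f\<in>hol_disc. LL m \<beta> l f = g"
    show "\<forall>g\<in>hol_disc. \<exists>f\<in>hol_disc. LL m \<beta> \<mu> f = g"
    proof
      fix g assume g: "g \<in> hol_disc"
      have "ZZ (\<lambda>z. \<beta> * g z) \<in> hol_disc" by (intro ZZ_in hol_disc_scale g)
      then obtain f where f: "f \<in> hol_disc" and e: "LL m \<beta> l f = ZZ (\<lambda>z. \<beta> * g z)" using s by blast
      have "f 0 = 0" using f0[OF f] e by (simp add: ZZ_def)
      then have fz: "f = ZZ (QQ f)" using ZZ_QQ f by simp
      have q: "QQ f \<in> hol_disc" using QQ_in f by blast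
      have "ZZ (\<lambda>z. \<beta> * LL m \<beta> \<mu> (QQ f) z) = ZZ (\<lambda>z. \<beta> * g z)"
        using LL_ZZ[OF q, of l] e fz by (simp add: \<mu>_def)
      then have "(\<lambda>z. \<beta> * LL m \<beta> \<mu> (QQ f) z) = (\<lambda>z. \<beta> * g z)"
        using ZZ_inj hol_disc_scale[OF LL_in[OF q]] hol_disc_scale[OF g] by blast
      then have "LL m \<beta> \<mu> (QQ f) = g" using b0 by (auto simp: fun_eq_iff)
      then show "\<exists>f\<in>hol_disc. LL m \<beta> \<mu> f = g" using q by blast
    qed
  next
    assume s: "\<forall>g\<in>hol_disc. \<exists>f\<in>hol_disc. LL m \<beta> \<mu> f = g"
    show "\<forall>g\<in>hol_disc. \<exists>f\<in>hol_disc. LL m \<beta> l f = g"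
    proof
      fix g assume g: "g \<in> hol_disc"
      define c where "c = g 0 / (l - m 0)"
      define g' where "g' = (\<lambda>z. g z - LL m \<beta> l (KK c) z)"
      have g'in: "g' \<in> hol_disc" unfolding g'_def by (intro hol_disc_diff g LL_in KK_in)
      have "g' 0 = 0" using assms by (simp add: g'_def LL_0 KK_def c_def)
      then have gz: "g' = ZZ (QQ g')" using ZZ_QQ g'in by simp
      have q: "QQ g' \<in> hol_disc" using QQ_in g'in by blast
      obtain h where h: "h \<in> hol_disc" and e: "LL m \<beta> \<mu> h = (\<lambda>z. cnj \<beta> * QQ g' z)"
        using s hol_disc_scale[OF q] by blast
      have "LL m \<beta> l (ZZ h) = ZZ (\<lambda>z. \<beta> * (cnj \<beta> * QQ g' z))"
        using LL_ZZ[OF h, of l] e by (simp add: \<mu>_def)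
      also have "\<dots> = g'" using gz bcnj by (simp add: mult.assoc[symmetric])
      finally have "LL m \<beta> l (\<lambda>z. KK c z + ZZ h z) = g"
        by (simp add: LL_add g'_def)
      moreover have "(\<lambda>z. KK c z + ZZ h z) \<in> hol_disc" by (intro hol_disc_add KK_in ZZ_in h)
      ultimately show "\<exists>f\<in>hol_disc. LL m \<beta> l f = g" by blast
    qed
  qed
  show ?thesis unfolding bij_iff k1 s1 \<mu>_def ..
qed

lemma m0_spec: "\<not> bij_betw (LL m \<beta> (m 0)) hol_disc hol_disc"
proof
  assume "bij_betw (LL m \<beta> (m 0)) hol_disc hol_disc"
  then obtain f where "f \<in> hol_disc" "LL m \<beta> (m 0) f = KK 1"
    using KK_in unfolding bij_iff by blast
  then have "LL m \<beta> (m 0) f 0 = 1" by (simp add: KK_def)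
  then show False by (simp add: LL_0)
qed

end

theorem theorem2p1:
  fixes \<beta> :: complex and m :: "complex \<Rightarrow> complex"
  assumes "norm \<beta> = 1"
    and "m holomorphic_on ball 0 1"
    and "\<exists>z\<in>ball 0 1. m z \<noteq> 0"
  shows "hol_spectrum (wcomp_op m \<beta>) = (\<lambda>l. \<beta> * l) ` hol_spectrum (wcomp_op m \<beta>) \<union> {m 0}"
proof -
  have sp: "hol_spectrum (wcomp_op m \<beta>) = {l. \<not> bij_betw (LL m \<beta> l) hol_disc hol_disc}"
    unfolding hol_spectrum_def LL_def by simp
  have bc: "\<beta> * cnj \<beta> = 1" using bcnj[OF assms(1,2)] .
  have bc2: "\<beta> * (cnj \<beta> * l) = l" for l using bc by (metis mult.assoc mult_1)
  have bc3: "cnj \<beta> * (\<beta> * l) = l" for l using bc by (metis mult.assoc mult.commute mult_1)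
  show ?thesis unfolding sp
  proof (intro equalityI subsetI)
    fix l assume l: "l \<in> {l. \<not> bij_betw (LL m \<beta> l) hol_disc hol_disc}"
    show "l \<in> (\<lambda>l. \<beta> * l) ` {l. \<not> bij_betw (LL m \<beta> l) hol_disc hol_disc} \<union> {m 0}"
    proof (cases "l = m 0")
      case False
      then have "\<not> bij_betw (LL m \<beta> (cnj \<beta> * l)) hol_disc hol_disc"
        using l key[OF assms(1,2) False] by simp
      then show ?thesis using bc2[of l] by (metis (mono_tags, lifting) UnI1 image_eqI mem_Collect_eq)
    qed simp
  next
    fix l assume l: "l \<in> (\<lambda>l. \<beta> * l) ` {l. \<not> bij_betw (LL m \<beta> l) hol_disc hol_disc} \<union> {m 0}"
    show "l \<in> {l. \<not> bij_betw (LL m \<beta> l) hol_disc hol_disc}"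
    proof (cases "l = m 0")
      case True then show ?thesis using m0_spec[OF assms(1,2)] by simp
    next
      case False
      then obtain \<mu> where mu: "\<not> bij_betw (LL m \<beta> \<mu>) hol_disc hol_disc" "l = \<beta> * \<mu>" using l by auto
      then show ?thesis using key[OF assms(1,2) False] bc3[of \<mu>] by simp
    qed
  qed
qed

end
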